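(* Let $M$ be a smooth manifold of dimension $n$, let $L\in C^\infty(J^1M)$ and $\beta=dq^1\wedge\dots\wedge dq^n$, so that $L\beta\in\Omega^n(J^1M)$ is a first-order Lagrangian. Then (1) $\mathcal{E}(L\beta)$ is effective; (2) $\Delta_{\mathcal{E}(L\beta)}\phi=0$ is the Euler–Lagrange equation of the functional $\Phi_{L\beta}[\phi]=\int_M (j^1\phi)^*(L\beta)$ (over compactly supported $\phi$), i.e. it is equivalent to $\frac{\partial L(q,\phi,\phi_\mu)}{\partial\phi}-\frac{\partial}{\partial q^\mu}\frac{\partial L(q,\phi,\phi_\mu)}{\partial\phi_\mu}=0$.
   Context: $J^1M$ is the first jet bundle of functions on $M$ with local coordinates $(q^\mu,u,p_\mu)$; $j^1\phi=(q^\mu,\phi,\phi_\mu)$ with $\phi_\mu=\partial_{q^\mu}\phi$. Contact form $\mathfrak c=du-p_\mu dq^\mu$, Reeb field $\chi=\partial_u$. Projection $p(\alpha)=\alpha-\mathfrak c\wedge(\chi\lrcorner\alpha)$, projected derivative $d_p=p\circ d$. Bottom operator $\bot\alpha=\partial_{p_\mu}\lrcorner\partial_{q^\mu}\lrcorner\alpha$ (summed) for $\deg\alpha>1$, $\bot\alpha=0$ otherwise. Euler operator $\mathcal{E}:\Omega^n(J^1M)\to\Omega^n(J^1M)$, $\mathcal{E}=d_p\,\bot\, d_p+\mathcal{L}_\chi$, where $\mathcal L_\chi$ is the Lie derivative. Monge–Ampère operator $\Delta_\omega\phi=(j^1\phi)^*\omega$. A form $\omega$ is effective if $\chi\lrcorner\omega=0$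 and $\bot\omega=0$. *)

theory Defs
  imports "HOL-Analysis.Analysis"
begin

text \<open>A point (and a tangent vector) of J^1 U, U open in R^n, in coordinates (q, u, p).
  The dimension n of M is CARD('n).\<close>
type_synonym 'n jet = "(real^'n) \<times> real \<times> (real^'n)"

text \<open>Differential forms on J^1 U: a form evaluated at a point on a list of (constant)
  tangent vectors.  A k-form is only meaningful on lists of length k.\<close>
type_synonym 'n form = "'n jet \<Rightarrow> 'n jet list \<Rightarrow> real"

definition dd :: "('a::real_normed_vector \<Rightarrow> 'b::real_normed_vector) \<Rightarrow> 'a \<Rightarrow> 'a \<Rightarrow> 'b" where
  "dd f x v = vector_derivative (\<lambda>t::real. f (x + t *\<^sub>R v)) (at 0)"

fun ddl :: "('a::real_normed_vector \<Rightarrow> 'b::real_normed_vector) \<Rightarrow> 'a list \<Rightarrow> 'a \<Rightarrow> 'b" where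
  "ddl f [] = f"
| "ddl f (v # vs) = (\<lambda>x. dd (ddl f vs) x v)"

definition smooth_on :: "'a::real_normed_vector set \<Rightarrow> ('a \<Rightarrow> 'b::real_normed_vector) \<Rightarrow> bool" where
  "smooth_on S f \<longleftrightarrow> (\<forall>vs. \<forall>x\<in>S. ddl f vs differentiable (at x))"

definition eq :: "'n::finite \<Rightarrow> 'n jet" where "eq \<mu> = (axis \<mu> 1, 0, 0)"
definition eu :: "'n::finite jet" where "eu = (0, 1, 0)"
definition ep :: "'n::finite \<Rightarrow> 'n jet" where "ep \<mu> = (0, 0, axis \<mu> 1)"

text \<open>Fixed enumeration of the coordinate indices (fixes the orientation of beta).\<close>
definition idx :: "'n::finite list" where
  "idx = (SOME xs. distinct xs \<and> set xs = UNIV)"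

definition remove_nth :: "nat \<Rightarrow> 'a list \<Rightarrow> 'a list" where
  "remove_nth i xs = take i xs @ drop (Suc i) xs"

text \<open>Exterior derivative (formula for constant vector fields on an open subset of R^N).\<close>
definition extd :: "'n::finite form \<Rightarrow> 'n form" where
  "extd \<omega> x vs = (\<Sum>i<length vs. (-1)^i * dd (\<lambda>y. \<omega> y (remove_nth i vs)) x (vs ! i))"

definition interior :: "'n::finite jet \<Rightarrow> 'n form \<Rightarrow> 'n form" where
  "interior X \<omega> x vs = \<omega> x (X # vs)"

definition wedge1 :: "'n::finite form \<Rightarrow> 'n form \<Rightarrow> 'n form" where
  "wedge1 c \<alpha> x vs = (\<Sum>i<length vs. (-1)^i * c x [vs ! i] * \<alpha> x (remove_nth i vs))"

text \<open>Contact form c = du - p_mu dq^mu; Reeb field chi = d/du.\<close>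
definition contact :: "'n::finite form" where
  "contact x vs = (case vs of [v] \<Rightarrow> fst (snd v) - (snd (snd x)) \<bullet> (fst v) | _ \<Rightarrow> 0)"

definition proj :: "'n::finite form \<Rightarrow> 'n form" where
  "proj \<alpha> x vs = \<alpha> x vs - wedge1 contact (interior eu \<alpha>) x vs"

definition dproj :: "'n::finite form \<Rightarrow> 'n form" where
  "dproj \<alpha> = proj (extd \<alpha>)"

definition bot :: "nat \<Rightarrow> 'n::finite form \<Rightarrow> 'n form" where
  "bot k \<alpha> x vs = (if k > 1 then (\<Sum>\<mu>\<in>UNIV. interior (ep \<mu>) (interior (eq \<mu>) \<alpha>) x vs) else 0)"

text \<open>Lie derivative along the constant vector field chi = d/du.\<close>
definition lie_chi :: "'n::finite form \<Rightarrow> 'n form" where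
  "lie_chi \<alpha> x vs = dd (\<lambda>y. \<alpha> y vs) x eu"

definition euler_op :: "nat \<Rightarrow> 'n::finite form \<Rightarrow> 'n form" where
  "euler_op k \<omega> x vs = dproj (bot (k + 1) (dproj \<omega>)) x vs + lie_chi \<omega> x vs"

definition effective :: "'n::finite jet set \<Rightarrow> nat \<Rightarrow> 'n form \<Rightarrow> bool" where
  "effective D k \<omega> \<longleftrightarrow>
     (\<forall>x\<in>D. \<forall>vs. length vs + 1 = k \<longrightarrow> interior eu \<omega> x vs = 0) \<and>
     (\<forall>x\<in>D. \<forall>vs. length vs + 2 = k \<longrightarrow> bot k \<omega> x vs = 0)"

definition beta :: "'n::finite form" where
  "beta x vs = (if length vs = CARD('n)
      then (\<Sum>\<sigma> | \<sigma> permutes {..<CARD('n)}.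
              of_int (sign \<sigma>) * (\<Prod>k<CARD('n). fst (vs ! \<sigma> k) $ (idx ! k)))
      else 0)"

definition J1 :: "(real^'n::finite) set \<Rightarrow> 'n jet set" where
  "J1 U = {(q, u, p). q \<in> U}"

definition jet1 :: "(real^'n::finite \<Rightarrow> real) \<Rightarrow> real^'n \<Rightarrow> 'n jet" where
  "jet1 \<phi> q = (q, \<phi> q, \<chi> \<mu>. dd \<phi> q (axis \<mu> 1))"

text \<open>Monge-Ampere operator: coefficient of (j^1 phi)^* omega w.r.t. dq^1 \<and> ... \<and> dq^n.\<close>
definition MA :: "'n::finite form \<Rightarrow> (real^'n \<Rightarrow> real) \<Rightarrow> real^'n \<Rightarrow> real" where
  "MA \<omega> \<phi> q = \<omega> (jet1 \<phi> q) (map (\<lambda>\<mu>. dd (jet1 \<phi>) q (axis \<mu> 1)) idx)"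

definition EL :: "('n::finite jet \<Rightarrow> real) \<Rightarrow> (real^'n \<Rightarrow> real) \<Rightarrow> real^'n \<Rightarrow> real" where
  "EL L \<phi> q = dd L (jet1 \<phi> q) eu
     - (\<Sum>\<mu>\<in>UNIV. dd (\<lambda>q'. dd L (jet1 \<phi> q') (ep \<mu>)) q (axis \<mu> 1))"

end

theory Submission
  imports Defs
begin


lemma dd_has_derivative:
  assumes "(f has_derivative f') (at x)"
  shows "dd f x v = f' v"
proof -
  have bl: "bounded_linear f'" using assms by (rule has_derivative_bounded_linear)
  have 1: "((\<lambda>t::real. x + t *\<^sub>R v) has_derivative (\<lambda>t. t *\<^sub>R v)) (at 0)"
    by (auto intro!: derivative_eq_intros)
  have 2: "(f has_derivative f') (at ((\<lambda>t::real. x + t *\<^sub>R v) 0))" using assms by simp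
  have "((f \<circ> (\<lambda>t::real. x + t *\<^sub>R v)) has_derivative (f' \<circ> (\<lambda>t. t *\<^sub>R v))) (at 0)"
    by (rule diff_chain_at[OF 1 2])
  moreover have "(f' \<circ> (\<lambda>t. t *\<^sub>R v)) = (\<lambda>t. t *\<^sub>R f' v)"
    using bl by (auto simp: linear_simps(5))
  ultimately have "((\<lambda>t. f (x + t *\<^sub>R v)) has_vector_derivative f' v) (at 0)"
    unfolding has_vector_derivative_def by (simp add: o_def)
  then show ?thesis unfolding dd_def by (rule vector_derivative_at)
qed

lemma dd_frechet:
  assumes "f differentiable (at x)"
  shows "dd f x v = frechet_derivative f (at x) v"
  using assms by (intro dd_has_derivative) (simp add: frechet_derivative_works)

lemma dd_cong_open:
  assumes "open S" "x \<in> S" "\<And>y. y \<in> S \<Longrightarrow> f y = g y"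
  shows "dd f x v = dd g x v"
proof -
  let ?T = "{t::real. x + t *\<^sub>R v \<in> S}"
  have "?T = (\<lambda>t. x + t *\<^sub>R v) -` S" by auto
  have oT: "open ?T"
    unfolding \<open>?T = _\<close> by (rule continuous_open_vimage[OF assms(1)]) (intro continuous_intros)
  have T0: "0 \<in> ?T" using assms(2) by simp
  have "\<And>f'. ((\<lambda>t. f (x + t *\<^sub>R v)) has_vector_derivative f') (at 0) \<longleftrightarrow>
              ((\<lambda>t. g (x + t *\<^sub>R v)) has_vector_derivative f') (at 0)"
  proof
    fix f' assume "((\<lambda>t. f (x + t *\<^sub>R v)) has_vector_derivative f') (at 0)"
    then show "((\<lambda>t. g (x + t *\<^sub>R v)) has_vector_derivative f') (at 0)"
      by (rule has_vector_derivative_transform_within_open[OF _ oT T0]) (simp add: assms(3))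
  next
    fix f' assume "((\<lambda>t. g (x + t *\<^sub>R v)) has_vector_derivative f') (at 0)"
    then show "((\<lambda>t. f (x + t *\<^sub>R v)) has_vector_derivative f') (at 0)"
      by (rule has_vector_derivative_transform_within_open[OF _ oT T0]) (simp add: assms(3))
  qed
  then show ?thesis unfolding dd_def vector_derivative_def by simp
qed

lemma dd_sum_mult:
  fixes f :: "'i \<Rightarrow> 'a::real_normed_vector \<Rightarrow> real"
  assumes "finite I" "\<And>i. i \<in> I \<Longrightarrow> f i differentiable (at x)"
  shows "dd (\<lambda>y. \<Sum>i\<in>I. f i y * c i) x v = (\<Sum>i\<in>I. dd (f i) x v * c i)"
proof -
  have "((\<lambda>y. \<Sum>i\<in>I. f i y * c i) has_derivative
         (\<lambda>h. \<Sum>i\<in>I. frechet_derivative (f i) (at x) h * c i)) (at x)"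
  proof (rule has_derivative_sum)
    fix i assume "i \<in> I"
    then have "(f i has_derivative frechet_derivative (f i) (at x)) (at x)"
      using assms(2) frechet_derivative_works by blast
    then show "((\<lambda>y. f i y * c i) has_derivative (\<lambda>h. frechet_derivative (f i) (at x) h * c i)) (at x)"
      by (rule has_derivative_mult_left)
  qed
  then show ?thesis using assms by (simp add: dd_has_derivative dd_frechet)
qed

lemma dd_mult_const:
  fixes f :: "'a::real_normed_vector \<Rightarrow> real"
  assumes "f differentiable (at x)"
  shows "dd (\<lambda>y. f y * c) x v = dd f x v * c"
  using dd_sum_mult[of "{()}" "\<lambda>_. f" x "\<lambda>_. c" v] assms by simp

lemma dd_chain:
  assumes "f differentiable (at x)" "g differentiable (at (f x))"
  shows "dd (\<lambda>y. g (f y)) x v = dd g (f x) (dd f x v)"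
proof -
  have "((g \<circ> f) has_derivative (frechet_derivative g (at (f x)) \<circ> frechet_derivative f (at x))) (at x)"
    using assms by (intro diff_chain_at) (simp_all add: frechet_derivative_works)
  then have "dd (g \<circ> f) x v = (frechet_derivative g (at (f x)) \<circ> frechet_derivative f (at x)) v"
    by (rule dd_has_derivative)
  then show ?thesis using assms by (simp add: o_def dd_frechet)
qed

lemma dd_line_deriv:
  fixes F :: "'a::real_normed_vector \<Rightarrow> real"
  assumes "F differentiable (at (y0 + s *\<^sub>R a))"
  shows "((\<lambda>s. F (y0 + s *\<^sub>R a)) has_real_derivative dd F (y0 + s *\<^sub>R a) a) (at s)"
proof -
  let ?F' = "frechet_derivative F (at (y0 + s *\<^sub>R a))"
  have d: "(F has_derivative ?F') (at (y0 + s *\<^sub>R a))" using assms frechet_derivative_works by blast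
  have bl: "bounded_linear ?F'" using d by (rule has_derivative_bounded_linear)
  have 1: "((\<lambda>t::real. y0 + t *\<^sub>R a) has_derivative (\<lambda>t. t *\<^sub>R a)) (at s)"
    by (auto intro!: derivative_eq_intros)
  have "((F \<circ> (\<lambda>t::real. y0 + t *\<^sub>R a)) has_derivative (?F' \<circ> (\<lambda>t. t *\<^sub>R a))) (at s)"
    by (rule diff_chain_at[OF 1]) (use d in simp)
  moreover have "(?F' \<circ> (\<lambda>t. t *\<^sub>R a)) = (\<lambda>t. ?F' a * t)"
    using bl by (auto simp: linear_simps(5))
  ultimately show ?thesis using assms
    by (simp add: has_field_derivative_def o_def dd_frechet)
qed



lemma young_limit:
  fixes F :: "'a::real_normed_vector \<Rightarrow> real"
  assumes oS: "open S" and xS: "x \<in> S" and dF: "\<And>y. y \<in> S \<Longrightarrow> F differentiable (at y)"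
    and dG: "(\<lambda>y. dd F y a) differentiable (at x)"
  shows "((\<lambda>h. (F (x + h *\<^sub>R a + h *\<^sub>R b) - F (x + h *\<^sub>R a) - F (x + h *\<^sub>R b) + F x) / h^2)
           \<longlongrightarrow> dd (\<lambda>y. dd F y a) x b) (at_right 0)"
proof -
  define G where "G = (\<lambda>y. dd F y a)"
  define G' where "G' = frechet_derivative G (at x)"
  have hG: "(G has_derivative G') (at x)" using dG unfolding G_def G'_def frechet_derivative_works by simp
  have blG: "bounded_linear G'" using hG by (rule has_derivative_bounded_linear)
  have c: "dd G x b = G' b" using hG by (rule dd_has_derivative)
  obtain r where r: "r > 0" "ball x r \<subseteq> S" using oS xS openE by blast
  define K where "K = 2 * norm a + norm b + 1"
  have K: "K > 0" unfolding K_def by (simp add: add_nonneg_pos)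
  show ?thesis
    unfolding G_def[symmetric] c
  proof (rule tendstoI)
    fix e :: real assume e: "e > 0"
    define \<epsilon> where "\<epsilon> = e / (2 * K)"
    have \<epsilon>: "\<epsilon> > 0" unfolding \<epsilon>_def using e K by simp
    obtain \<delta> where \<delta>: "\<delta> > 0" and
      \<delta>G: "\<And>y. norm (y - x) < \<delta> \<Longrightarrow> norm (G y - G x - G' (y - x)) \<le> \<epsilon> * norm (y - x)"
      using hG \<epsilon> unfolding has_derivative_at_alt by blast
    define d where "d = min r \<delta> / K"
    have d: "d > 0" unfolding d_def using r \<delta> K by simp
    show "\<forall>\<^sub>F h in at_right 0. dist ((F (x + h *\<^sub>R a + h *\<^sub>R b) - F (x + h *\<^sub>R a) - F (x + h *\<^sub>R b) + F x) / h^2) (G' b) < e"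
      unfolding eventually_at_right_field
    proof (intro exI[of _ d] conjI allI impI)
      show "(0::real) < d" by (rule d)
      fix h :: real assume h: "0 < h" "h < d"
      have hK: "h * K < min r \<delta>" using h K unfolding d_def by (simp add: pos_less_divide_eq)
      have small: "norm (t *\<^sub>R a + u *\<^sub>R b) < min r \<delta>" if "0 \<le> t" "t \<le> h" "0 \<le> u" "u \<le> h" for t u
      proof -
        have "norm (t *\<^sub>R a + u *\<^sub>R b) \<le> t * norm a + u * norm b"
          using that by (metis abs_of_nonneg norm_scaleR norm_triangle_ineq)
        also have "\<dots> \<le> h * norm a + h * norm b"
          using that by (intro add_mono mult_right_mono) auto
        also have "\<dots> < h * K" unfolding K_def using h
          by (simp add: algebra_simps add_pos_nonneg)
        finally show ?thesis using hK by simp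
      qed
      have inS: "x + (t *\<^sub>R a + u *\<^sub>R b) \<in> S" if "0 \<le> t" "t \<le> h" "0 \<le> u" "u \<le> h" for t u
        proof -
        have "norm (x - (x + (t *\<^sub>R a + u *\<^sub>R b))) < r" using small[OF that]
          by (metis min_less_iff_conj norm_minus_commute add_diff_cancel_left')
        then show ?thesis using r(2) by (auto simp: subset_iff dist_norm)
      qed
      define \<phi> where "\<phi> = (\<lambda>s. F ((x + h *\<^sub>R b) + s *\<^sub>R a) - F (x + s *\<^sub>R a))"
      have der: "DERIV \<phi> s :> G ((x + h *\<^sub>R b) + s *\<^sub>R a) - G (x + s *\<^sub>R a)" if "0 \<le> s" "s \<le> h" for s
      proof -
        have 1: "x + h *\<^sub>R b + s *\<^sub>R a \<in> S" using inS[of s h] that h by (simp add: add_ac)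
        have 2: "x + s *\<^sub>R a \<in> S" using inS[of s 0] that h by simp
        show ?thesis unfolding \<phi>_def G_def
          by (intro DERIV_diff dd_line_deriv dF 1 2)
      qed
      obtain z where z: "0 < z" "z < h" and
        mvt: "\<phi> h - \<phi> 0 = (h - 0) * (G ((x + h *\<^sub>R b) + z *\<^sub>R a) - G (x + z *\<^sub>R a))"
        using MVT2[OF h(1), of \<phi>, OF der] by auto
      have \<Delta>: "F (x + h *\<^sub>R a + h *\<^sub>R b) - F (x + h *\<^sub>R a) - F (x + h *\<^sub>R b) + F x
            = h * (G ((x + h *\<^sub>R b) + z *\<^sub>R a) - G (x + z *\<^sub>R a))"
        using mvt unfolding \<phi>_def by (simp add: add_ac)
      define k1 where "k1 = z *\<^sub>R a + h *\<^sub>R b"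
      define k2 where "k2 = z *\<^sub>R a + 0 *\<^sub>R b"
      have k1: "norm k1 < min r \<delta>" unfolding k1_def using small[of z h] z h by simp
      have k2: "norm k2 < min r \<delta>" unfolding k2_def using small[of z 0] z h by simp
      have nk1: "norm k1 \<le> h * norm a + h * norm b"
      proof -
        have "norm k1 \<le> z * norm a + h * norm b" unfolding k1_def
          using z h by (metis abs_of_nonneg less_imp_le norm_scaleR norm_triangle_ineq)
        also have "\<dots> \<le> h * norm a + h * norm b" using z by (simp add: mult_right_mono)
        finally show ?thesis .
      qed
      have nk2: "norm k2 \<le> h * norm a" unfolding k2_def using z by (simp add: mult_right_mono)
      have e1: "norm (G (x + k1) - G x - G' k1) \<le> \<epsilon> * norm k1" using \<delta>G[of "x + k1"] k1 by simp
      have e2: "norm (G (x + k2) - G x - G' k2) \<le> \<epsilon> * norm k2" using \<delta>G[of "x + k2"] k2 by simp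
      have lin: "G' k1 - G' k2 = h * G' b"
        unfolding k1_def k2_def using blG by (simp add: linear_simps)
      have eq: "G ((x + h *\<^sub>R b) + z *\<^sub>R a) - G (x + z *\<^sub>R a) - h * G' b
          = (G (x + k1) - G x - G' k1) - (G (x + k2) - G x - G' k2)"
        using lin unfolding k1_def k2_def by (simp add: add_ac)
      have "\<bar>G ((x + h *\<^sub>R b) + z *\<^sub>R a) - G (x + z *\<^sub>R a) - h * G' b\<bar> \<le> \<epsilon> * norm k1 + \<epsilon> * norm k2"
        unfolding eq using e1 e2 by (simp add: abs_diff_le_iff abs_le_iff) 
      also have "\<dots> \<le> \<epsilon> * (h * K)"
      proof -
        have "norm k1 + norm k2 \<le> h * K" using nk1 nk2 h unfolding K_def by (simp add: algebra_simps)
        then show ?thesis using \<epsilon> by (simp add: distrib_left[symmetric])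
      qed
      finally have bnd: "\<bar>G ((x + h *\<^sub>R b) + z *\<^sub>R a) - G (x + z *\<^sub>R a) - h * G' b\<bar> \<le> \<epsilon> * (h * K)" .
      have "dist ((F (x + h *\<^sub>R a + h *\<^sub>R b) - F (x + h *\<^sub>R a) - F (x + h *\<^sub>R b) + F x) / h^2) (G' b)
          = \<bar>G ((x + h *\<^sub>R b) + z *\<^sub>R a) - G (x + z *\<^sub>R a) - h * G' b\<bar> / h"
      proof -
        define D where "D = G ((x + h *\<^sub>R b) + z *\<^sub>R a) - G (x + z *\<^sub>R a)"
        have "(h * D) / h^2 - G' b = (D - h * G' b) / h" using h(1)
          by (simp add: power2_eq_square field_simps)
        then have "dist ((h * D) / h^2) (G' b) = \<bar>D - h * G' b\<bar> / h"
          using h(1) by (simp add: dist_real_def)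
        then show ?thesis unfolding \<Delta> D_def .
      qed
      also have "\<dots> \<le> \<epsilon> * K" using bnd h(1) by (simp add: divide_le_eq mult_ac)
      also have "\<dots> < e" unfolding \<epsilon>_def using K e by simp
      finally show "dist ((F (x + h *\<^sub>R a + h *\<^sub>R b) - F (x + h *\<^sub>R a) - F (x + h *\<^sub>R b) + F x) / h^2) (G' b) < e" .
    qed
  qed
qed

lemma mixed_sym:
  fixes F :: "'a::real_normed_vector \<Rightarrow> real"
  assumes oS: "open S" and xS: "x \<in> S" and dF: "\<And>y. y \<in> S \<Longrightarrow> F differentiable (at y)"
    and dGa: "(\<lambda>y. dd F y a) differentiable (at x)"
    and dGb: "(\<lambda>y. dd F y b) differentiable (at x)"
  shows "dd (\<lambda>y. dd F y a) x b = dd (\<lambda>y. dd F y b) x a"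
proof -
  have 1: "((\<lambda>h. (F (x + h *\<^sub>R a + h *\<^sub>R b) - F (x + h *\<^sub>R a) - F (x + h *\<^sub>R b) + F x) / h^2)
           \<longlongrightarrow> dd (\<lambda>y. dd F y a) x b) (at_right 0)"
    by (rule young_limit[OF oS xS dF dGa])
  have 2: "((\<lambda>h. (F (x + h *\<^sub>R b + h *\<^sub>R a) - F (x + h *\<^sub>R b) - F (x + h *\<^sub>R a) + F x) / h^2)
           \<longlongrightarrow> dd (\<lambda>y. dd F y b) x a) (at_right 0)"
    by (rule young_limit[OF oS xS dF dGb])
  have "(\<lambda>h. (F (x + h *\<^sub>R b + h *\<^sub>R a) - F (x + h *\<^sub>R b) - F (x + h *\<^sub>R a) + F x) / h^2)
      = (\<lambda>h. (F (x + h *\<^sub>R a + h *\<^sub>R b) - F (x + h *\<^sub>R a) - F (x + h *\<^sub>R b) + F x) / h^2)"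
    by (simp add: algebra_simps)
  with 2 have 3: "((\<lambda>h. (F (x + h *\<^sub>R a + h *\<^sub>R b) - F (x + h *\<^sub>R a) - F (x + h *\<^sub>R b) + F x) / h^2)
           \<longlongrightarrow> dd (\<lambda>y. dd F y b) x a) (at_right 0)" by simp
  show ?thesis using tendsto_unique[OF _ 1 3] by simp
qed



lemma idx_props: "distinct (idx :: 'n::finite list) \<and> set (idx :: 'n list) = UNIV"
proof -
  obtain xs :: "'n list" where "set xs = UNIV" "distinct xs"
    using finite_distinct_list[of "UNIV :: 'n set"] by auto
  then have "\<exists>xs :: 'n list. distinct xs \<and> set xs = UNIV" by blast
  then show ?thesis unfolding idx_def by (rule someI_ex)
qed

lemma idx_distinct: "distinct (idx :: 'n::finite list)" using idx_props by blast
lemma idx_set: "set (idx :: 'n::finite list) = UNIV" using idx_props by blast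
lemma idx_length: "length (idx :: 'n::finite list) = CARD('n)"
  using distinct_card[OF idx_distinct[where 'n='n]] idx_set[where 'n='n] by simp

definition bq :: "(real^'n::finite) list \<Rightarrow> real" where
  "bq ws = (\<Sum>\<sigma> | \<sigma> permutes {..<CARD('n)}.
              of_int (sign \<sigma>) * (\<Prod>k<CARD('n). (ws ! \<sigma> k) $ (idx ! k)))"

lemma beta_bq: "beta x vs = (if length vs = CARD('n::finite) then bq (map fst vs :: (real^'n) list) else 0)"
proof (cases "length vs = CARD('n)")
  case True
  have "(\<Prod>k<CARD('n). fst (vs ! \<sigma> k) $ (idx ! k)) = (\<Prod>k<CARD('n). (map fst vs ! \<sigma> k) $ (idx ! k))"
    if "\<sigma> permutes {..<CARD('n)}" for \<sigma>
  proof (rule prod.cong)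
    fix k assume "k \<in> {..<CARD('n)}"
    then have "\<sigma> k < length vs" using permutes_in_image[OF that] True by simp
    then show "fst (vs ! \<sigma> k) $ (idx ! k) = (map fst vs ! \<sigma> k) $ (idx ! k)" by simp
  qed simp
  then show ?thesis using True unfolding beta_def bq_def
    by (simp only: True simp_thms if_True) (rule sum.cong[OF refl], simp)
next
  case False
  then show ?thesis unfolding beta_def by simp
qed

lemma bq_perm:
  assumes len: "length (ws :: (real^'n::finite) list) = CARD('n)" and p: "\<pi> permutes {..<CARD('n)}"
  shows "bq (map (\<lambda>j. ws ! \<pi> j) [0..<CARD('n)]) = of_int (sign \<pi>) * bq ws"
proof -
  let ?P = "{\<sigma>. \<sigma> permutes {..<CARD('n)}}"
  let ?g = "\<lambda>\<tau>. of_int (sign \<tau>) * (\<Prod>k<CARD('n). (ws ! \<tau> k) $ (idx ! k))"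
  have pp: "permutation \<pi>" using p by (auto intro: permutes_imp_permutation)
  have "bq (map (\<lambda>j. ws ! \<pi> j) [0..<CARD('n)])
      = (\<Sum>\<sigma>\<in>?P. of_int (sign \<sigma>) * (\<Prod>k<CARD('n). (ws ! \<pi> (\<sigma> k)) $ (idx ! k)))"
    unfolding bq_def
  proof (intro sum.cong refl arg_cong2[where f="(*)"] prod.cong)
    fix \<sigma> k assume "\<sigma> \<in> ?P" "k \<in> {..<CARD('n)}"
    then have "\<sigma> k < CARD('n)" using permutes_in_image by fastforce
    then show "(map (\<lambda>j. ws ! \<pi> j) [0..<CARD('n)] ! \<sigma> k) $ (idx ! k) = (ws ! \<pi> (\<sigma> k)) $ (idx ! k)"
      by simp
  qed
  also have "\<dots> = (\<Sum>\<sigma>\<in>?P. of_int (sign \<pi>) * ?g (\<pi> \<circ> \<sigma>))"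
  proof (rule sum.cong[OF refl])
    fix \<sigma> assume "\<sigma> \<in> ?P"
    then have ps: "permutation \<sigma>" by (auto intro: permutes_imp_permutation)
    have "sign (\<pi> \<circ> \<sigma>) = sign \<pi> * sign \<sigma>" using sign_compose[OF pp ps] .
    moreover have "(of_int (sign \<pi>) :: real) * of_int (sign \<pi>) = 1"
      by (metis of_int_1 of_int_mult sign_idempotent)
    ultimately show "of_int (sign \<sigma>) * (\<Prod>k<CARD('n). (ws ! \<pi> (\<sigma> k)) $ (idx ! k)) = of_int (sign \<pi>) * ?g (\<pi> \<circ> \<sigma>)"
      by (simp add: mult.assoc[symmetric])
  qed
  also have "\<dots> = of_int (sign \<pi>) * (\<Sum>\<sigma>\<in>?P. ?g (\<pi> \<circ> \<sigma>))" by (simp add: sum_distrib_left)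
  also have "(\<Sum>\<sigma>\<in>?P. ?g (\<pi> \<circ> \<sigma>)) = (\<Sum>\<sigma>\<in>?P. ?g \<sigma>)"
    using setum_permutations_compose_left[OF p, of ?g] by simp
  finally show ?thesis unfolding bq_def by simp
qed

lemma bq_zero:
  assumes "j < CARD('n::finite)" "(ws :: (real^'n) list) ! j = 0"
  shows "bq ws = 0"
  unfolding bq_def
proof (rule sum.neutral, rule ballI)
  fix \<sigma> assume "\<sigma> \<in> {\<sigma>. \<sigma> permutes {..<CARD('n)}}"
  then have p: "\<sigma> permutes {..<CARD('n)}" by simp
  let ?k = "inv \<sigma> j"
  have k: "?k < CARD('n)" using permutes_in_image[OF permutes_inv[OF p]] assms(1) by simp
  have sk: "\<sigma> ?k = j" using permutes_inverses(1)[OF p] by simp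
  have "(\<Prod>k<CARD('n). (ws ! \<sigma> k) $ (idx ! k)) = 0"
    using k sk assms(2) by (intro prod_zero) (auto intro!: bexI[of _ ?k])
  then show "of_int (sign \<sigma>) * (\<Prod>k<CARD('n). (ws ! \<sigma> k) $ (idx ! k)) = 0" by simp
qed

lemma bq_swap:
  assumes len: "length (ws :: (real^'n::finite) list) = CARD('n)" and ij: "i < CARD('n)" "j < CARD('n)" "i \<noteq> j"
  shows "bq (ws[i := ws ! j, j := ws ! i]) = - bq ws"
proof -
  have p: "Transposition.transpose i j permutes {..<CARD('n)}" using ij by (intro permutes_swap_id) auto
  have "map (\<lambda>k. ws ! Transposition.transpose i j k) [0..<CARD('n)] = ws[i := ws ! j, j := ws ! i]"
    using len ij by (intro nth_equalityI) (auto simp: transpose_def nth_list_update)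
  then show ?thesis using bq_perm[OF len p] ij by (simp add: sign_swap_id)
qed

lemma bq_rep:
  assumes len: "length (ws :: (real^'n::finite) list) = CARD('n)" and ij: "i < CARD('n)" "j < CARD('n)" "i \<noteq> j"
    and eq: "ws ! i = ws ! j"
  shows "bq ws = 0"
proof -
  have "ws[i := ws ! j, j := ws ! i] = ws" using eq by (metis list_update_id)
  then show ?thesis using bq_swap[OF len ij] by simp
qed

lemma bq_adj:
  assumes "length (zs @ a # b # ys :: (real^'n::finite) list) = CARD('n)"
  shows "bq (zs @ a # b # ys) = - bq (zs @ b # a # ys)"
proof -
  let ?ws = "zs @ a # b # ys"
  have "?ws[length zs := ?ws ! Suc (length zs), Suc (length zs) := ?ws ! length zs] = zs @ b # a # ys"
    by (simp add: list_update_append nth_append)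
  moreover have "bq (?ws[length zs := ?ws ! Suc (length zs), Suc (length zs) := ?ws ! length zs]) = - bq ?ws"
    using assms by (intro bq_swap) auto
  ultimately show ?thesis by simp
qed

lemma bq_move:
  "length (zs @ a # xs @ ys :: (real^'n::finite) list) = CARD('n) \<Longrightarrow>
   bq (zs @ a # xs @ ys) = (-1) ^ length xs * bq (zs @ xs @ a # ys)"
proof (induction xs arbitrary: zs)
  case Nil
  then show ?case by simp
next
  case (Cons x xs)
  have "bq (zs @ a # (x # xs) @ ys) = - bq (zs @ x # a # xs @ ys)"
    using bq_adj[of zs a x "xs @ ys"] Cons.prems by simp
  also have "bq (zs @ x # a # xs @ ys) = bq ((zs @ [x]) @ a # xs @ ys)" by simp
  also have "\<dots> = (-1) ^ length xs * bq ((zs @ [x]) @ xs @ a # ys)"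
    using Cons.IH[of "zs @ [x]"] Cons.prems by simp
  finally show ?case by simp
qed

lemma bq_axes:
  assumes len: "length (W :: (real^'n::finite) list) = CARD('n)" and W: "\<And>j. j < CARD('n) \<Longrightarrow> W ! j = axis (idx ! j) 1"
  shows "bq W = 1"
proof -
  let ?P = "{\<sigma>. \<sigma> permutes {..<CARD('n)}}"
  have pr: "(\<Prod>k<CARD('n). (W ! \<sigma> k) $ (idx ! k)) = (if \<sigma> = id then 1 else 0)" if p: "\<sigma> permutes {..<CARD('n)}" for \<sigma>
  proof -
    have fac: "(W ! \<sigma> k) $ (idx ! k) = (if \<sigma> k = k then 1 else 0)" if k: "k < CARD('n)" for k
    proof -
      have sk: "\<sigma> k < CARD('n)" using permutes_in_image[OF p] k by simp
      have "((idx :: 'n list) ! k = idx ! \<sigma> k) \<longleftrightarrow> k = \<sigma> k"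
        proof -
        have dI: "distinct (idx :: 'n list)" by (rule idx_distinct)
        have lI: "length (idx :: 'n list) = CARD('n)" by (rule idx_length)
        show ?thesis using nth_eq_iff_index_eq[OF dI, of k "\<sigma> k"] k sk lI by simp
      qed
      then show ?thesis using W[OF sk] by (auto simp: axis_def)
    qed
    show ?thesis
    proof (cases "\<sigma> = id")
      case True
      then show ?thesis using fac by simp
    next
      case False
      then obtain k where "\<sigma> k \<noteq> k" by (metis eq_id_iff)
      moreover have "k < CARD('n)" using permutes_not_in[OF p, of k] calculation by auto
      ultimately have "(\<Prod>k<CARD('n). (W ! \<sigma> k) $ (idx ! k)) = 0"
        using fac by (intro prod_zero) auto
      then show ?thesis using False by simp
    qed
  qed
  have "bq W = (\<Sum>\<sigma>\<in>?P. if \<sigma> = id then 1 else 0)"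
    unfolding bq_def by (intro sum.cong) (auto simp: pr)
  also have "\<dots> = 1" using permutes_id[of "{..<CARD('n)}"] finite_permutations[of "{..<CARD('n)}"]
    by (simp add: sum.delta)
  finally show ?thesis .
qed

lemma bq_axes_replace:
  assumes len: "length (W :: (real^'n::finite) list) = CARD('n)" and W: "\<And>j. j < CARD('n) \<Longrightarrow> W ! j = axis (idx ! j) 1"
    and i: "i < CARD('n)"
  shows "bq (axis \<mu> 1 # take i W @ drop (Suc i) W) = (-1) ^ i * (if \<mu> = idx ! i then 1 else 0)"
proof -
  have "bq ([] @ axis \<mu> 1 # take i W @ drop (Suc i) W) = (-1) ^ length (take i W) * bq ([] @ take i W @ axis \<mu> 1 # drop (Suc i) W)"
    using len i by (intro bq_move) simp
  moreover have "take i W @ axis \<mu> 1 # drop (Suc i) W = W[i := axis \<mu> 1]"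
    using len i by (simp add: upd_conv_take_nth_drop)
  moreover have "length (take i W) = i" using len i by simp
  ultimately have e: "bq (axis \<mu> 1 # take i W @ drop (Suc i) W) = (-1) ^ i * bq (W[i := axis \<mu> 1])" by simp
  show ?thesis
  proof (cases "\<mu> = idx ! i")
    case True
    then have "W[i := axis \<mu> 1] = W" using W[OF i] by (metis list_update_id)
    then show ?thesis using e bq_axes[OF len W] True by simp
  next
    case False
    obtain m where m: "m < length (idx :: 'n list)" "idx ! m = \<mu>"
    proof -
      have "\<mu> \<in> set (idx :: 'n list)" by (simp add: idx_set)
      then show ?thesis using that unfolding in_set_conv_nth by blast
    qed
    have m': "m < CARD('n)" using m by (simp add: idx_length)
    have mi: "m \<noteq> i" using False m by auto
    have "bq (W[i := axis \<mu> 1]) = 0"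
      using len i m' mi W[OF m'] m(2) by (intro bq_rep[of _ i m]) (auto simp: nth_list_update)
    then show ?thesis using e False by simp
  qed
qed



lemma rn0[simp]: "remove_nth 0 (a # ws) = ws" by (simp add: remove_nth_def)
lemma rnS[simp]: "remove_nth (Suc j) (a # ws) = a # remove_nth j ws" by (simp add: remove_nth_def)

lemma contact1: "contact x [v] = fst (snd v) - snd (snd x) \<bullet> fst v" by (simp add: contact_def)

lemma extd_gen:
  fixes f :: "'i \<Rightarrow> 'n::finite jet \<Rightarrow> real" and \<gamma> :: "'i \<Rightarrow> 'n jet list \<Rightarrow> real" and \<alpha> :: "'n form"
  assumes oS: "open S" and xS: "x \<in> S" and fin: "finite I"
    and dF: "\<And>i. i \<in> I \<Longrightarrow> f i differentiable (at x)"
    and aeq: "\<And>y ws. y \<in> S \<Longrightarrow> \<alpha> y ws = (\<Sum>i\<in>I. f i y * \<gamma> i ws)"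
  shows "extd \<alpha> x vs = (\<Sum>j<length vs. (-1)^j * (\<Sum>i\<in>I. dd (f i) x (vs!j) * \<gamma> i (remove_nth j vs)))"
  unfolding extd_def
proof (rule sum.cong[OF refl])
  fix j assume "j \<in> {..<length vs}"
  have "dd (\<lambda>y. \<alpha> y (remove_nth j vs)) x (vs ! j) = dd (\<lambda>y. \<Sum>i\<in>I. f i y * \<gamma> i (remove_nth j vs)) x (vs ! j)"
    by (rule dd_cong_open[OF oS xS]) (simp add: aeq)
  also have "\<dots> = (\<Sum>i\<in>I. dd (f i) x (vs!j) * \<gamma> i (remove_nth j vs))"
    by (rule dd_sum_mult[OF fin dF])
  finally show "(-1)^j * dd (\<lambda>y. \<alpha> y (remove_nth j vs)) x (vs ! j) = (-1)^j * (\<Sum>i\<in>I. dd (f i) x (vs!j) * \<gamma> i (remove_nth j vs))"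
    by simp
qed

lemma int_gen:
  fixes f :: "'i \<Rightarrow> 'n::finite jet \<Rightarrow> real" and \<gamma> :: "'i \<Rightarrow> 'n jet list \<Rightarrow> real" and \<alpha> :: "'n form"
  assumes oS: "open S" and xS: "x \<in> S" and fin: "finite I"
    and dF: "\<And>i. i \<in> I \<Longrightarrow> f i differentiable (at x)"
    and aeq: "\<And>y ws. y \<in> S \<Longrightarrow> \<alpha> y ws = (\<Sum>i\<in>I. f i y * \<gamma> i ws)"
    and g0: "\<And>i ws. i \<in> I \<Longrightarrow> \<gamma> i (eu # ws) = 0"
  shows "interior eu (extd \<alpha>) x ws = (\<Sum>i\<in>I. dd (f i) x eu * \<gamma> i ws)"
proof -
  have "interior eu (extd \<alpha>) x ws = (\<Sum>j<Suc (length ws). (-1)^j * (\<Sum>i\<in>I. dd (f i) x ((eu # ws)!j) * \<gamma> i (remove_nth j (eu # ws))))"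
    unfolding interior_def using extd_gen[where S=S and x=x and I=I and f=f and \<alpha>=\<alpha> and \<gamma>=\<gamma> and vs="eu # ws", OF oS xS fin dF aeq] by simp
  also have "\<dots> = (\<Sum>i\<in>I. dd (f i) x eu * \<gamma> i ws)"
    unfolding sum.lessThan_Suc_shift using g0 by simp
  finally show ?thesis .
qed

lemma dproj_gen:
  fixes f :: "'i \<Rightarrow> 'n::finite jet \<Rightarrow> real" and \<gamma> :: "'i \<Rightarrow> 'n jet list \<Rightarrow> real" and \<alpha> :: "'n form"
  assumes oS: "open S" and xS: "x \<in> S" and fin: "finite I"
    and dF: "\<And>i. i \<in> I \<Longrightarrow> f i differentiable (at x)"
    and aeq: "\<And>y ws. y \<in> S \<Longrightarrow> \<alpha> y ws = (\<Sum>i\<in>I. f i y * \<gamma> i ws)"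
    and g0: "\<And>i ws. i \<in> I \<Longrightarrow> \<gamma> i (eu # ws) = 0"
  shows "dproj \<alpha> x vs = (\<Sum>j<length vs. (-1)^j *
            (\<Sum>i\<in>I. (dd (f i) x (vs!j) - dd (f i) x eu * contact x [vs!j]) * \<gamma> i (remove_nth j vs)))"
proof -
  have "dproj \<alpha> x vs = (\<Sum>j<length vs. (-1)^j * (\<Sum>i\<in>I. dd (f i) x (vs!j) * \<gamma> i (remove_nth j vs)))
      - (\<Sum>j<length vs. (-1)^j * contact x [vs ! j] * (\<Sum>i\<in>I. dd (f i) x eu * \<gamma> i (remove_nth j vs)))"
    unfolding dproj_def proj_def wedge1_def
    using extd_gen[where S=S and x=x and I=I and f=f and \<alpha>=\<alpha> and \<gamma>=\<gamma>, OF oS xS fin dF aeq]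
      int_gen[where S=S and x=x and I=I and f=f and \<alpha>=\<alpha> and \<gamma>=\<gamma>, OF oS xS fin dF aeq g0] by simp
  also have "\<dots> = (\<Sum>j<length vs. (-1)^j *
            (\<Sum>i\<in>I. (dd (f i) x (vs!j) - dd (f i) x eu * contact x [vs!j]) * \<gamma> i (remove_nth j vs)))"
    unfolding sum_subtractf[symmetric]
    by (intro sum.cong refl) (simp add: sum_distrib_left sum_subtractf[symmetric] algebra_simps)
  finally show ?thesis .
qed

lemma beta_indep: "beta x vs = beta y vs" by (simp add: beta_def)

lemma beta_fst0:
  fixes vs :: "'n::finite jet list"
  assumes "j < length vs" "fst (vs ! j) = 0"
  shows "beta y vs = 0"
proof (cases "length vs = CARD('n)")
  case True
  have "bq (map fst vs :: (real^'n) list) = 0" using assms True by (intro bq_zero[of j]) auto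
  then show ?thesis by (simp add: beta_bq True)
qed (simp add: beta_bq)

lemma beta_swap: "beta y (a # b # ws) = - (beta y (b # a # ws) :: real)"
  using bq_adj[of "[]" "fst a" "fst b" "map fst ws"] by (simp add: beta_bq)

lemma fst_eu[simp]: "fst (eu :: 'n::finite jet) = 0" by (simp add: eu_def)
lemma fst_ep[simp]: "fst (ep \<mu> :: 'n::finite jet) = 0" by (simp add: ep_def)
lemma fst_eq[simp]: "fst (eq \<mu> :: 'n::finite jet) = axis \<mu> 1" by (simp add: eq_def)
lemma contact_eu[simp]: "contact x [eu :: 'n::finite jet] = 1" by (simp add: contact1 eu_def)
lemma contact_ep[simp]: "contact x [ep \<mu> :: 'n::finite jet] = 0" by (simp add: contact1 ep_def)



lemma dd_minus:
  fixes f :: "'a::real_normed_vector \<Rightarrow> real"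
  assumes "f differentiable (at x)"
  shows "dd (\<lambda>y. - f y) x v = - dd f x v" and "(\<lambda>y. - f y) differentiable (at x)"
proof -
  have "((\<lambda>y. - f y) has_derivative (\<lambda>h. - frechet_derivative f (at x) h)) (at x)"
    using assms by (intro has_derivative_minus) (simp add: frechet_derivative_works)
  then show "dd (\<lambda>y. - f y) x v = - dd f x v" "(\<lambda>y. - f y) differentiable (at x)"
    using assms by (auto simp: dd_has_derivative dd_frechet differentiable_def)
qed

lemma J1_open: "open U \<Longrightarrow> open (J1 U)"
proof -
  assume "open U"
  moreover have "J1 U = fst -` U" by (auto simp: J1_def)
  ultimately show ?thesis by (simp add: open_vimage_fst)
qed

lemma beta_ep0[simp]: "beta y (ep \<mu> # ws) = 0" by (rule beta_fst0[of 0]) simp_all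
lemma beta_ep1[simp]: "beta y (a # ep \<mu> # ws) = 0" by (rule beta_fst0[of 1]) simp_all
lemma beta_ep2[simp]: "beta y (a # b # ep \<mu> # ws) = 0" by (rule beta_fst0[of 2]) simp_all
lemma beta_eu0[simp]: "beta y (eu # ws) = 0" by (rule beta_fst0[of 0]) simp_all
lemma beta_eu1[simp]: "beta y (a # eu # ws) = 0" by (rule beta_fst0[of 1]) simp_all

locale LL =
  fixes U :: "(real^'n::finite) set" and L :: "'n jet \<Rightarrow> real"
  assumes oU: "open U" and sm: "smooth_on (J1 U) L"
begin

definition "S = J1 U"
definition "\<omega> = (\<lambda>x vs. L x * beta x vs)"
definition "f = (\<lambda>\<mu> y. - dd L y (ep \<mu>))"

lemma oS: "open S" unfolding S_def by (rule J1_open[OF oU])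

lemma dddiff: "x \<in> S \<Longrightarrow> ddl L vs differentiable (at x)"
  using sm unfolding smooth_on_def S_def by blast

lemma dL: "x \<in> S \<Longrightarrow> L differentiable (at x)" using dddiff[of x "[]"] by simp
lemma dP: "x \<in> S \<Longrightarrow> (\<lambda>y. dd L y v) differentiable (at x)" using dddiff[of x "[v]"] by simp
lemma df: "x \<in> S \<Longrightarrow> f \<mu> differentiable (at x)" unfolding f_def using dd_minus(2)[OF dP] by blast

lemma dproj_omega:
  assumes x: "x \<in> S"
  shows "dproj \<omega> x vs = (\<Sum>j<length vs. (-1)^j *
            ((dd L x (vs!j) - dd L x eu * contact x [vs!j]) * beta 0 (remove_nth j vs)))"
proof -
  have "dproj \<omega> x vs = (\<Sum>j<length vs. (-1)^j *
            (\<Sum>i\<in>{()}. (dd ((\<lambda>_. L) i) x (vs!j) - dd ((\<lambda>_. L) i) x eu * contact x [vs!j]) * (\<lambda>_ ws. beta 0 ws) i (remove_nth j vs)))"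
  proof (rule dproj_gen[OF oS x])
    show "\<And>y ws. y \<in> S \<Longrightarrow> \<omega> y ws = (\<Sum>i\<in>{()}. (\<lambda>_. L) i y * (\<lambda>_ ws. beta 0 ws) i ws)"
      by (simp add: \<omega>_def beta_def)
  qed (simp_all add: dL[OF x])
  then show ?thesis by simp
qed

lemma B_eq:
  assumes y: "y \<in> S"
  shows "bot (Suc CARD('n)) (dproj \<omega>) y ws = (\<Sum>\<mu>\<in>UNIV. f \<mu> y * beta 0 (eq \<mu> # ws))"
proof -
  have "bot (Suc CARD('n)) (dproj \<omega>) y ws = (\<Sum>\<mu>\<in>UNIV. dproj \<omega> y (eq \<mu> # ep \<mu> # ws))"
    unfolding bot_def interior_def by simp
  also have "\<dots> = (\<Sum>\<mu>\<in>UNIV. f \<mu> y * beta 0 (eq \<mu> # ws))"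
    unfolding dproj_omega[OF y] by (simp only: length_Cons sum.lessThan_Suc_shift) (simp add: f_def)
  finally show ?thesis .
qed

lemma E_eq:
  assumes x: "x \<in> S"
  shows "euler_op CARD('n) \<omega> x vs = (\<Sum>j<length vs. (-1)^j *
            (\<Sum>\<mu>\<in>UNIV. (dd (f \<mu>) x (vs!j) - dd (f \<mu>) x eu * contact x [vs!j]) * beta 0 (eq \<mu> # remove_nth j vs)))
          + dd L x eu * beta 0 vs"
proof -
  have 1: "dproj (bot (Suc CARD('n)) (dproj \<omega>)) x vs = (\<Sum>j<length vs. (-1)^j *
            (\<Sum>\<mu>\<in>UNIV. (dd (f \<mu>) x (vs!j) - dd (f \<mu>) x eu * contact x [vs!j]) * (\<lambda>\<mu> ws. beta 0 (eq \<mu> # ws)) \<mu> (remove_nth j vs)))"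
    by (rule dproj_gen[OF oS x]) (simp_all add: B_eq df[OF x])
  have "(\<lambda>y. \<omega> y vs) = (\<lambda>y. L y * beta 0 vs)" by (simp add: \<omega>_def beta_def)
  then have 2: "lie_chi \<omega> x vs = dd L x eu * beta 0 vs"
    unfolding lie_chi_def by (simp add: dd_mult_const dL[OF x])
  show ?thesis unfolding euler_op_def using 1 2 by simp
qed

end



lemma vec_as_sum: "(\<chi> \<nu>. c \<nu>) = (\<Sum>\<nu>\<in>UNIV. c \<nu> *\<^sub>R axis \<nu> (1::real))"
  by (simp add: vec_eq_iff axis_def if_distrib cong: if_cong)

lemma jet1_hd:
  fixes \<phi> :: "real^'n::finite \<Rightarrow> real"
  assumes sm: "smooth_on U \<phi>" and q: "q \<in> U"
  shows "(jet1 \<phi> has_derivative (\<lambda>h. (h, frechet_derivative \<phi> (at q) h,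
            \<Sum>\<nu>\<in>UNIV. frechet_derivative (\<lambda>q'. dd \<phi> q' (axis \<nu> 1)) (at q) h *\<^sub>R axis \<nu> 1))) (at q)"
proof -
  have "ddl \<phi> [] differentiable (at q)" using sm q unfolding smooth_on_def by blast
  then have d0: "\<phi> differentiable (at q)" by simp
  have d1: "(\<lambda>q'. dd \<phi> q' (axis \<nu> 1)) differentiable (at q)" for \<nu>
  proof -
    have "ddl \<phi> [axis \<nu> 1] differentiable (at q)" using sm q unfolding smooth_on_def by blast
    then show ?thesis by simp
  qed
  have j: "jet1 \<phi> = (\<lambda>q'. (q', \<phi> q', \<Sum>\<nu>\<in>UNIV. dd \<phi> q' (axis \<nu> 1) *\<^sub>R axis \<nu> 1))"
    by (rule ext) (simp add: jet1_def vec_as_sum)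
  show ?thesis unfolding j
    using d0 d1
    by (intro has_derivative_Pair has_derivative_ident has_derivative_sum has_derivative_scaleR_left)
       (simp_all add: frechet_derivative_works)
qed

context LL begin

lemma eff1:
  assumes x: "x \<in> S"
  shows "interior eu (euler_op CARD('n) \<omega>) x ws = 0"
  unfolding interior_def E_eq[OF x] by (simp only: length_Cons sum.lessThan_Suc_shift) simp

lemma eff2:
  assumes x: "x \<in> S" and len: "length ws + 2 = CARD('n)"
  shows "bot CARD('n) (euler_op CARD('n) \<omega>) x ws = 0"
proof -
  define H where "H = (\<lambda>\<mu> \<nu>. dd (\<lambda>y. dd L y (ep \<mu>)) x (ep \<nu>))"
  define bb where "bb = (\<lambda>\<mu> \<nu>. beta 0 (eq \<mu> # eq \<nu> # ws) :: real)"
  have Hs: "H \<mu> \<nu> = H \<nu> \<mu>" for \<mu> \<nu>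
    unfolding H_def by (rule mixed_sym[OF oS x dL dP[OF x] dP[OF x]])
  have bbs: "bb \<mu> \<nu> = - bb \<nu> \<mu>" for \<mu> \<nu> unfolding bb_def by (rule beta_swap)
  have fH: "dd (f \<mu>) x (ep \<nu>) = - H \<mu> \<nu>" for \<mu> \<nu>
    unfolding f_def H_def by (rule dd_minus(1)[OF dP[OF x]])
  have "bot CARD('n) (euler_op CARD('n) \<omega>) x ws = (\<Sum>\<nu>\<in>UNIV. euler_op CARD('n) \<omega> x (eq \<nu> # ep \<nu> # ws))"
    using len unfolding bot_def interior_def by simp
  also have "\<dots> = (\<Sum>\<nu>\<in>UNIV. - (\<Sum>\<mu>\<in>UNIV. dd (f \<mu>) x (ep \<nu>) * beta 0 (eq \<mu> # eq \<nu> # ws)))"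
    unfolding E_eq[OF x] by (simp only: length_Cons sum.lessThan_Suc_shift) simp
  also have "\<dots> = (\<Sum>\<nu>\<in>UNIV. \<Sum>\<mu>\<in>UNIV. H \<mu> \<nu> * bb \<mu> \<nu>)"
    by (simp add: fH bb_def sum_negf)
  also have "\<dots> = 0"
  proof -
    let ?T = "(\<Sum>\<nu>\<in>UNIV. \<Sum>\<mu>\<in>UNIV. H \<mu> \<nu> * bb \<mu> \<nu>)"
    have "?T = (\<Sum>\<mu>\<in>UNIV. \<Sum>\<nu>\<in>UNIV. H \<mu> \<nu> * bb \<mu> \<nu>)" by (rule sum.swap)
    also have "\<dots> = (\<Sum>\<mu>\<in>UNIV. \<Sum>\<nu>\<in>UNIV. - (H \<nu> \<mu> * bb \<nu> \<mu>))"
      by (intro sum.cong refl) (metis Hs bbs mult_minus_right)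
    also have "\<dots> = - ?T" by (simp add: sum_negf)
    finally show ?thesis by simp
  qed
  finally show ?thesis .
qed

end



lemma sum_idx: "(\<Sum>j<CARD('n::finite). g ((idx :: 'n list) ! j)) = (\<Sum>\<mu>\<in>UNIV. g \<mu>)"
proof -
  have dI: "distinct (idx :: 'n list)" by (rule idx_distinct)
  have lI: "length (idx :: 'n list) = CARD('n)" by (rule idx_length)
  have sI: "set (idx :: 'n list) = UNIV" by (rule idx_set)
  have "bij_betw (\<lambda>j. (idx :: 'n list) ! j) {..<CARD('n)} UNIV"
    unfolding bij_betw_def
  proof
    show "inj_on (\<lambda>j. (idx :: 'n list) ! j) {..<CARD('n)}"
      using dI lI by (auto simp: inj_on_def nth_eq_iff_index_eq)
    show "(\<lambda>j. (idx :: 'n list) ! j) ` {..<CARD('n)} = UNIV"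
      using sI lI by (auto simp: set_conv_nth image_def)
  qed
  then show ?thesis by (rule sum.reindex_bij_betw)
qed

context LL begin

lemma MA_EL:
  fixes \<phi> :: "real^'n \<Rightarrow> real"
  assumes smp: "smooth_on U \<phi>" and q: "q \<in> U"
  shows "MA (euler_op CARD('n) \<omega>) \<phi> q = EL L \<phi> q"
proof -
  define J' where "J' = (\<lambda>h. (h, frechet_derivative \<phi> (at q) h,
            \<Sum>\<nu>\<in>UNIV. frechet_derivative (\<lambda>q'. dd \<phi> q' (axis \<nu> 1)) (at q) h *\<^sub>R axis \<nu> (1::real)))"
  have hd: "(jet1 \<phi> has_derivative J') (at q)" unfolding J'_def by (rule jet1_hd[OF smp q])
  have dJ: "jet1 \<phi> differentiable (at q)" using hd by (auto simp: differentiable_def)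
  have d0: "\<phi> differentiable (at q)"
  proof -
    have "ddl \<phi> [] differentiable (at q)" using smp q unfolding smooth_on_def by blast
    then show ?thesis by simp
  qed
  define x where "x = jet1 \<phi> q"
  have xS: "x \<in> S" unfolding x_def S_def J1_def jet1_def using q by simp
  define V where "V = (\<lambda>\<mu>. dd (jet1 \<phi>) q (axis \<mu> 1))"
  have V: "V \<mu> = J' (axis \<mu> 1)" for \<mu> unfolding V_def by (rule dd_has_derivative[OF hd])
  have fstV: "fst (V \<mu>) = axis \<mu> 1" for \<mu> unfolding V J'_def by simp
  have cV: "contact x [V \<mu>] = 0" for \<mu>
    unfolding contact1 V J'_def x_def jet1_def using d0
    by (simp add: inner_axis dd_frechet)
  define vs where "vs = map V idx"
  have lvs: "length vs = CARD('n)" unfolding vs_def by (simp add: idx_length)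
  have vsj: "vs ! j = V (idx ! j)" if "j < CARD('n)" for j
    unfolding vs_def using that by (simp add: idx_length)
  define W where "W = map fst vs"
  have lW: "length W = CARD('n)" unfolding W_def using lvs by simp
  have Wj: "W ! j = axis (idx ! j) 1" if "j < CARD('n)" for j
    unfolding W_def using that lvs by (simp add: vsj fstV)
  have b1: "beta 0 vs = 1"
    using bq_axes[OF lW Wj] lvs unfolding W_def by (simp add: beta_bq)
  have b2: "beta 0 (eq \<mu> # remove_nth j vs) = (-1) ^ j * (if \<mu> = idx ! j then 1 else 0)"
    if j: "j < CARD('n)" for j \<mu>
  proof -
    have len: "length (eq \<mu> # remove_nth j vs) = CARD('n)"
      using j lvs by (simp add: remove_nth_def)
    have "map fst (eq \<mu> # remove_nth j vs) = axis \<mu> 1 # take j W @ drop (Suc j) W"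
      unfolding W_def remove_nth_def by (simp add: take_map drop_map)
    then show ?thesis using bq_axes_replace[OF lW Wj j, of \<mu>] len by (simp add: beta_bq)
  qed
  have trm: "(-1)^j * (\<Sum>\<mu>\<in>UNIV. (dd (f \<mu>) x (vs!j) - dd (f \<mu>) x eu * contact x [vs!j]) * beta 0 (eq \<mu> # remove_nth j vs))
      = dd (f (idx ! j)) x (V (idx ! j))" if j: "j < CARD('n)" for j
  proof -
    have "(\<Sum>\<mu>\<in>UNIV. (dd (f \<mu>) x (vs!j) - dd (f \<mu>) x eu * contact x [vs!j]) * beta 0 (eq \<mu> # remove_nth j vs))
        = (\<Sum>\<mu>\<in>UNIV. if \<mu> = idx ! j then dd (f \<mu>) x (V (idx ! j)) * (-1)^j else 0)"
      by (intro sum.cong refl) (simp add: b2[OF j] vsj[OF j] cV)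
    also have "\<dots> = dd (f (idx ! j)) x (V (idx ! j)) * (-1)^j" by (simp add: sum.delta')
    finally show ?thesis by simp
  qed
  have chain: "dd (f \<mu>) x (V \<mu>) = - dd (\<lambda>q'. dd L (jet1 \<phi> q') (ep \<mu>)) q (axis \<mu> 1)" for \<mu>
  proof -
    have "dd (f \<mu>) x (V \<mu>) = - dd (\<lambda>y. dd L y (ep \<mu>)) x (V \<mu>)"
      unfolding f_def by (rule dd_minus(1)[OF dP[OF xS]])
    also have "dd (\<lambda>y. dd L y (ep \<mu>)) x (V \<mu>) = dd (\<lambda>q'. dd L (jet1 \<phi> q') (ep \<mu>)) q (axis \<mu> 1)"
      unfolding V_def x_def by (rule dd_chain[symmetric, OF dJ dP[OF xS[unfolded x_def]]])
    finally show ?thesis .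
  qed
  have "MA (euler_op CARD('n) \<omega>) \<phi> q = euler_op CARD('n) \<omega> x vs"
    unfolding MA_def x_def vs_def V_def by simp
  also have "\<dots> = (\<Sum>j<CARD('n). dd (f (idx ! j)) x (V (idx ! j))) + dd L x eu"
    unfolding E_eq[OF xS] lvs b1 using trm by simp
  also have "\<dots> = (\<Sum>\<mu>\<in>UNIV. dd (f \<mu>) x (V \<mu>)) + dd L x eu"
    by (simp add: sum_idx[of "\<lambda>\<mu>. dd (f \<mu>) x (V \<mu>)"])
  also have "\<dots> = EL L \<phi> q"
  proof -
    have "(\<Sum>\<mu>\<in>UNIV. dd (f \<mu>) x (V \<mu>)) = - (\<Sum>\<mu>\<in>UNIV. dd (\<lambda>q'. dd L (jet1 \<phi> q') (ep \<mu>)) q (axis \<mu> 1))"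
      by (simp add: chain sum_negf)
    then show ?thesis unfolding EL_def x_def by simp
  qed
  finally show ?thesis .
qed

end


theorem mainTheorem3:
  fixes U :: "(real^'n::finite) set" and L :: "'n jet \<Rightarrow> real"
  assumes "open U" and "smooth_on (J1 U) L"
  shows "effective (J1 U) CARD('n) (euler_op CARD('n) (\<lambda>x vs. L x * beta x vs)) \<and>
         (\<forall>\<phi>. smooth_on U \<phi> \<longrightarrow> (\<forall>q\<in>U.
           MA (euler_op CARD('n) (\<lambda>x vs. L x * beta x vs)) \<phi> q = 0 \<longleftrightarrow> EL L \<phi> q = 0))"
proof -
  interpret LL U L using assms by unfold_locales
  have om: "(\<lambda>x vs. L x * beta x vs) = \<omega>" by (simp add: \<omega>_def)
  have e: "effective (J1 U) CARD('n) (euler_op CARD('n) \<omega>)"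
    unfolding effective_def S_def[symmetric] using eff1 eff2 by blast
  have m: "\<forall>\<phi>. smooth_on U \<phi> \<longrightarrow> (\<forall>q\<in>U. MA (euler_op CARD('n) \<omega>) \<phi> q = 0 \<longleftrightarrow> EL L \<phi> q = 0)"
    using MA_EL by simp
  show ?thesis unfolding om using e m by blast
qed

end
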